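(* For $n\ge 3$, $M_2(CP_{n-1})\simeq M_2(CC_n)\simeq S^{2n-1}$, where $CP_{n-1}$ is the clawed path of length $n-1$ and $CC_n$ is the clawed $n$-cycle.
   Context: A path of length $k$ has $k$ edges. For a graph $G$ of maximum degree at most $3$, the clawed graph $CG$ is obtained by subdividing every edge of $G$ and then attaching new leaves to every original vertex so that every original vertex has degree exactly $3$; $CP_{k}$ is the clawed graph of the path of length $k$ and $CC_n$ is the clawed graph of the cycle on $n$ vertices. $M_2(G)$ is the simplicial complex whose vertices are the edges of $G$ and whose faces are the $2$-matchings of $G$ (edge sets in which every vertex has degree at most $2$). *)

theory Defs
  imports "HOL-Analysis.Analysis"
begin

text \<open>Simple graphs are given by an edge set: a set of 2-element vertex sets.\<close>

definition vdeg :: "'a set set \<Rightarrow> 'a \<Rightarrow> nat" where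
  "vdeg E v = card {e \<in> E. v \<in> e}"

text \<open>Vertices of the clawed graph: original vertices, subdivision vertices
  (one per edge), and attached leaves.\<close>
datatype 'a cvert = Orig 'a | Sub "'a set" | Leaf 'a nat

text \<open>Clawed graph of a graph with vertex set V and edge set E (max degree at most 3):
  subdivide every edge, and attach 3 - deg v new leaves to each original vertex v.\<close>
definition clawed_edges :: "'a set \<Rightarrow> 'a set set \<Rightarrow> 'a cvert set set" where
  "clawed_edges V E =
     {{Orig u, Sub e} | u e. e \<in> E \<and> u \<in> e}
   \<union> {{Orig v, Leaf v i} | v i. v \<in> V \<and> i < 3 - vdeg E v}"

definition path_edges :: "nat \<Rightarrow> nat set set" where
  "path_edges k = {{i, Suc i} | i. i < k}"

definition cycle_edges :: "nat \<Rightarrow> nat set set" where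
  "cycle_edges n = {{i, Suc i mod n} | i. i < n}"

definition CP :: "nat \<Rightarrow> nat cvert set set" where
  "CP k = clawed_edges {0..k} (path_edges k)"

definition CC :: "nat \<Rightarrow> nat cvert set set" where
  "CC n = clawed_edges {0..<n} (cycle_edges n)"

definition two_matchings :: "'a set set \<Rightarrow> 'a set set set" where
  "two_matchings E = {F. F \<subseteq> E \<and> (\<forall>v. card {e \<in> F. v \<in> e} \<le> 2)}"

text \<open>Geometric realization of a finite simplicial complex with vertex set V and
  face set K (closed under subsets), as barycentric-coordinate functions
  inside the product topology on 'a \<Rightarrow> real.\<close>
definition geom_realization :: "'a set \<Rightarrow> 'a set set \<Rightarrow> ('a \<Rightarrow> real) topology" where
  "geom_realization V K = subtopology (powertop_real UNIV)
     {f. (\<forall>v. 0 \<le> f v) \<and> (\<forall>v. v \<notin> V \<longrightarrow> f v = 0) \<and> sum f V = 1 \<and> {v. f v \<noteq> 0} \<in> K}"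

definition M2 :: "'a set set \<Rightarrow> ('a set \<Rightarrow> real) topology" where
  "M2 E = geom_realization E (two_matchings E)"

end

theory Submission
  imports Defs
begin


lemma sum_blocks3: "(\<Sum>k<3*(m::nat). h k) = (\<Sum>j<m. h (3*j) + h (3*j+1) + h (3*j+2))"
  by (induction m) (simp_all add: numeral_3_eq_3 algebra_simps)

lemma sum_blocks2: "(\<Sum>k<2*(m::nat). h k) = (\<Sum>j<m. h (2*j) + h (2*j+1))"
  by (induction m) (simp_all add: algebra_simps)

definition Pm :: "nat \<Rightarrow> (nat \<Rightarrow> 'e) \<Rightarrow> ('e \<Rightarrow> real) \<Rightarrow> nat \<Rightarrow> real" where
 "Pm m t x i = (if i < 2*m then x (t (3*(i div 2) + i mod 2)) - x (t (3*(i div 2) + 2)) else 0)"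

definition Rm :: "(nat \<Rightarrow> real) \<Rightarrow> nat \<Rightarrow> real" where
 "Rm y k = (if k mod 3 = 0 then y (2*(k div 3)) + max 0 (max (- y (2*(k div 3))) (- y (2*(k div 3)+1)))
    else if k mod 3 = 1 then y (2*(k div 3)+1) + max 0 (max (- y (2*(k div 3))) (- y (2*(k div 3)+1)))
    else max 0 (max (- y (2*(k div 3))) (- y (2*(k div 3)+1))))"

definition Qm :: "nat \<Rightarrow> (nat \<Rightarrow> 'e) \<Rightarrow> (nat \<Rightarrow> real) \<Rightarrow> 'e \<Rightarrow> real" where
 "Qm m t y e = (if e \<in> t ` {..<3*m} then Rm y (the_inv_into {..<3*m} t e) else 0)"

definition Nm :: "nat \<Rightarrow> (nat \<Rightarrow> real) \<Rightarrow> real" where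
 "Nm m y = sqrt (\<Sum>i<2*m. y i ^ 2)"

definition SK :: "nat \<Rightarrow> (nat \<Rightarrow> 'e) \<Rightarrow> ('e \<Rightarrow> real) set" where
 "SK m t = {f. (\<forall>v. 0 \<le> f v) \<and> (\<forall>v. v \<notin> t ` {..<3*m} \<longrightarrow> f v = 0) \<and> sum f (t ` {..<3*m}) = 1
     \<and> (\<forall>j<m. f (t (3*j)) = 0 \<or> f (t (3*j+1)) = 0 \<or> f (t (3*j+2)) = 0)}"

definition SS :: "nat \<Rightarrow> (nat \<Rightarrow> real) set" where
 "SS m = {x. (\<Sum>i\<le>2*m-1. x i ^ 2) = 1 \<and> (\<forall>i>2*m-1. x i = 0)}"

lemma Rm_nonneg: "Rm y k \<ge> 0"
  unfolding Rm_def by auto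


lemma Rm_3j: "Rm y (3*j) = y (2*j) + max 0 (max (- y (2*j)) (- y (2*j+1)))"
  "Rm y (3*j+1) = y (2*j+1) + max 0 (max (- y (2*j)) (- y (2*j+1)))"
  "Rm y (3*j+2) = max 0 (max (- y (2*j)) (- y (2*j+1)))"
proof -
  have a: "(3*j+1) div 3 = j" "(3*j+1) mod 3 = 1" "(3*j+2) div 3 = j" "(3*j+2) mod 3 = 2" by presburger+
  show "Rm y (3*j) = y (2*j) + max 0 (max (- y (2*j)) (- y (2*j+1)))" unfolding Rm_def by simp
  show "Rm y (3*j+1) = y (2*j+1) + max 0 (max (- y (2*j)) (- y (2*j+1)))" unfolding Rm_def a by simp
  show "Rm y (3*j+2) = max 0 (max (- y (2*j)) (- y (2*j+1)))" unfolding Rm_def a by simp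
qed

lemma Rm_zero: "Rm y (3*j) = 0 \<or> Rm y (3*j+1) = 0 \<or> Rm y (3*j+2) = 0"
  unfolding Rm_3j by (auto simp: max_def)

lemma Rm_scale: assumes "c > 0" shows "Rm (\<lambda>i. y i / c) k = Rm y k / c"
proof -
  have "max 0 (max (- (a / c)) (- (b / c))) = max 0 (max (- a) (- b)) / c" for a b :: real
    using assms by (auto simp: max_def field_simps)
  then show ?thesis unfolding Rm_def by (simp add: add_divide_distrib)
qed

lemma Pm_scale: "Pm m t (\<lambda>e. x e / c) i = Pm m t x i / c"
  unfolding Pm_def by (simp add: diff_divide_distrib)

lemma Pm_2j: "j < m \<Longrightarrow> Pm m t x (2*j) = x (t (3*j)) - x (t (3*j+2))"
  "j < m \<Longrightarrow> Pm m t x (2*j+1) = x (t (3*j+1)) - x (t (3*j+2))"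
  unfolding Pm_def by auto

context
  fixes m :: nat and t :: "nat \<Rightarrow> 'e"
  assumes m1: "m \<ge> 1" and inj: "inj_on t {..<3*m}"
begin

lemma sumE: "sum g (t ` {..<3*m}) = (\<Sum>k<3*m. g (t k))"
  using inj by (simp add: sum.reindex)

lemma Qm_t: "k < 3*m \<Longrightarrow> Qm m t y (t k) = Rm y k"
  unfolding Qm_def using inj by (simp add: the_inv_into_f_f)

lemma QP: assumes f: "f \<in> SK m t" and k: "k < 3*m" shows "Rm (Pm m t f) k = f (t k)"
proof -
  define j where "j = k div 3"
  have j: "j < m" using k unfolding j_def by auto
  have k3: "k = 3*j + k mod 3" unfolding j_def by simp
  have nn: "f (t (3*j)) \<ge> 0" "f (t (3*j+1)) \<ge> 0" "f (t (3*j+2)) \<ge> 0" using f unfolding SK_def by auto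
  have z: "f (t (3*j)) = 0 \<or> f (t (3*j+1)) = 0 \<or> f (t (3*j+2)) = 0" using f j unfolding SK_def by auto
  have mx: "max 0 (max (- (f (t (3*j)) - f (t (3*j+2)))) (- (f (t (3*j+1)) - f (t (3*j+2))))) = f (t (3*j+2))"
    using nn z by (auto simp: max_def)
  have "k mod 3 = 0 \<or> k mod 3 = 1 \<or> k mod 3 = 2" by auto
  then show ?thesis
  proof (elim disjE)
    assume "k mod 3 = 0" then have "k = 3*j" using k3 by simp
    then show ?thesis using mx by (simp only: Rm_3j Pm_2j j)
  next
    assume "k mod 3 = 1" then have "k = 3*j+1" using k3 by simp
    then show ?thesis using mx by (simp only: Rm_3j Pm_2j j)
  next
    assume "k mod 3 = 2" then have "k = 3*j+2" using k3 by simp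
    then show ?thesis using mx by (simp only: Rm_3j Pm_2j j)
  qed
qed

lemma PQ: assumes i: "i < 2*m" shows "Pm m t (Qm m t y) i = y i"
proof -
  define j where "j = i div 2"
  have j: "j < m" using i unfolding j_def by auto
  have "i = 2*j \<or> i = 2*j+1" unfolding j_def by auto
  moreover have "3*j < 3*m" "3*j+1 < 3*m" "3*j+2 < 3*m" using j by auto
  ultimately show ?thesis
    by (auto simp only: Pm_2j j Qm_t Rm_3j)
qed


lemma SS_sum: "y \<in> SS m \<Longrightarrow> (\<Sum>i<2*m. y i ^ 2) = 1"
proof -
  assume "y \<in> SS m"
  moreover have "{..2*m-1} = {..<2*m}" using m1 by auto
  ultimately show ?thesis unfolding SS_def by auto
qed

lemma k_cases: "k < 3*m \<Longrightarrow> \<exists>j<m. k = 3*j \<or> k = 3*j+1 \<or> k = 3*j+2"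
  by (rule exI[of _ "k div 3"]) auto

lemma N_pos: assumes f: "f \<in> SK m t" shows "Nm m (Pm m t f) > 0"
proof (rule ccontr)
  assume "\<not> ?thesis"
  then have "(\<Sum>i<2*m. (Pm m t f i) ^ 2) = 0" unfolding Nm_def
    by (metis (no_types, lifting) not_less real_sqrt_gt_zero sum_nonneg zero_le_power2 order.not_eq_order_implies_strict)
  then have P0: "\<forall>i<2*m. Pm m t f i = 0" by (simp add: sum_nonneg_eq_0_iff)
  have "f (t k) = 0" if k: "k < 3*m" for k
  proof -
    obtain j where j: "j < m" and kk: "k = 3*j \<or> k = 3*j+1 \<or> k = 3*j+2" using k_cases[OF k] by blast
    have "Pm m t f (2*j) = 0" "Pm m t f (2*j+1) = 0" using P0 j by auto
    then have e: "f (t (3*j)) = f (t (3*j+2))" "f (t (3*j+1)) = f (t (3*j+2))" using Pm_2j[OF j, of t f] by simp_all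
    have "f (t (3*j)) = 0 \<or> f (t (3*j+1)) = 0 \<or> f (t (3*j+2)) = 0" using f j unfolding SK_def by auto
    then show ?thesis using e kk by auto
  qed
  then have "sum f (t ` {..<3*m}) = 0" by (simp add: sumE)
  then show False using f unfolding SK_def by auto
qed

lemma Q_sum_pos: assumes y: "y \<in> SS m" shows "sum (Qm m t y) (t ` {..<3*m}) > 0"
proof (rule ccontr)
  assume "\<not> ?thesis"
  moreover have nn: "\<forall>k<3*m. Rm y k \<ge> 0" by (simp add: Rm_nonneg)
  moreover have "sum (Rm y) {..<3*m} \<ge> 0" by (rule sum_nonneg) (simp add: Rm_nonneg)
  ultimately have "(\<Sum>k<3*m. Rm y k) = 0" by (simp add: sumE Qm_t)
  then have R0: "\<forall>k<3*m. Rm y k = 0" using sum_nonneg_eq_0_iff[of "{..<3*m}" "Rm y"] by (simp add: Rm_nonneg)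
  have "y i = 0" if i: "i < 2*m" for i
  proof -
    define j where "j = i div 2"
    have j: "j < m" using i unfolding j_def by auto
    have "i = 2*j \<or> i = 2*j+1" unfolding j_def by auto
    moreover have "Rm y (3*j) = 0" "Rm y (3*j+1) = 0" "Rm y (3*j+2) = 0" using R0 j by auto
    ultimately show ?thesis unfolding Rm_3j by (auto simp: max_def split: if_splits)
  qed
  then have "(\<Sum>i<2*m. y i ^ 2) = 0" by simp
  then show False using SS_sum[OF y] by simp
qed

definition FF :: "('e \<Rightarrow> real) \<Rightarrow> nat \<Rightarrow> real" where
  "FF f = (\<lambda>i. Pm m t f i / Nm m (Pm m t f))"

definition GG :: "(nat \<Rightarrow> real) \<Rightarrow> 'e \<Rightarrow> real" where
  "GG y = (\<lambda>e. Qm m t y e / sum (Qm m t y) (t ` {..<3*m}))"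

lemma FF_in: assumes f: "f \<in> SK m t" shows "FF f \<in> SS m"
proof -
  have N: "Nm m (Pm m t f) > 0" using N_pos[OF f] .
  have s: "(\<Sum>i<2*m. (Pm m t f i) ^ 2) > 0" using N unfolding Nm_def by simp
  have "{..2*m-1} = {..<2*m}" using m1 by auto
  moreover have "(\<Sum>i<2*m. (Pm m t f i / Nm m (Pm m t f)) ^ 2) = 1"
    using s by (simp add: power_divide sum_divide_distrib[symmetric] Nm_def)
  moreover have "\<forall>i>2*m-1. Pm m t f i = 0" using m1 unfolding Pm_def by auto
  ultimately show ?thesis unfolding SS_def FF_def by auto
qed

lemma GG_in: assumes y: "y \<in> SS m" shows "GG y \<in> SK m t"
proof -
  have s: "sum (Qm m t y) (t ` {..<3*m}) > 0" using Q_sum_pos[OF y] .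
  have nn: "Qm m t y e \<ge> 0" for e unfolding Qm_def by (simp add: Rm_nonneg)
  have "\<forall>v. 0 \<le> GG y v" unfolding GG_def using s nn by simp
  moreover have "\<forall>v. v \<notin> t ` {..<3*m} \<longrightarrow> GG y v = 0" unfolding GG_def Qm_def by simp
  moreover have "sum (GG y) (t ` {..<3*m}) = 1" unfolding GG_def using s
    by (simp add: sum_divide_distrib[symmetric])
  moreover have "\<forall>j<m. GG y (t (3*j)) = 0 \<or> GG y (t (3*j+1)) = 0 \<or> GG y (t (3*j+2)) = 0"
  proof (intro allI impI)
    fix j assume j: "j < m"
    have "3*j < 3*m" "3*j+1 < 3*m" "3*j+2 < 3*m" using j by auto
    then show "GG y (t (3*j)) = 0 \<or> GG y (t (3*j+1)) = 0 \<or> GG y (t (3*j+2)) = 0"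
      unfolding GG_def using Rm_zero[of y j] s by (simp add: Qm_t)
  qed
  ultimately show ?thesis unfolding SK_def by blast
qed

lemma GF: assumes f: "f \<in> SK m t" shows "GG (FF f) = f"
proof
  fix e
  define N where "N = Nm m (Pm m t f)"
  have N: "N > 0" using N_pos[OF f] unfolding N_def .
  have Q: "Qm m t (FF f) e' = Qm m t (Pm m t f) e' / N" for e'
    unfolding FF_def N_def[symmetric] Qm_def using Rm_scale[OF N] by simp
  have QP': "Qm m t (Pm m t f) e' = f e'" for e'
  proof (cases "e' \<in> t ` {..<3*m}")
    case True then obtain k where "k < 3*m" "e' = t k" by auto
    then show ?thesis using QP[OF f] Qm_t by simp
  next
    case False then show ?thesis using f unfolding Qm_def SK_def by auto
  qed
  have "sum (Qm m t (FF f)) (t ` {..<3*m}) = 1 / N"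
    unfolding Q QP' using f unfolding SK_def by (simp add: sum_divide_distrib[symmetric])
  then show "GG (FF f) e = f e" unfolding GG_def Q QP' using N by simp
qed

lemma FG: assumes y: "y \<in> SS m" shows "FF (GG y) = y"
proof
  fix i
  define s where "s = sum (Qm m t y) (t ` {..<3*m})"
  have s: "s > 0" using Q_sum_pos[OF y] unfolding s_def .
  have P: "Pm m t (GG y) i' = Pm m t (Qm m t y) i' / s" for i'
    unfolding GG_def s_def[symmetric] by (rule Pm_scale)
  have PQ': "i' < 2*m \<Longrightarrow> Pm m t (Qm m t y) i' = y i'" for i' by (rule PQ)
  have "(\<Sum>i<2*m. (Pm m t (GG y) i)^2) = (\<Sum>i<2*m. (y i)^2) / s^2"
    by (simp add: P PQ' power_divide sum_divide_distrib)
  then have "Nm m (Pm m t (GG y)) = 1 / s" unfolding Nm_def using SS_sum[OF y] s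
    by (simp add: real_sqrt_divide)
  then show "FF (GG y) i = y i"
  proof -
    assume Nv: "Nm m (Pm m t (GG y)) = 1 / s"
    show ?thesis
    proof (cases "i < 2*m")
      case True then show ?thesis unfolding FF_def Nv P using PQ' s by simp
    next
      case False then have "y i = 0" using y m1 unfolding SS_def by auto
      then show ?thesis using False unfolding FF_def Pm_def by simp
    qed
  qed
qed


lemma proj: "continuous_map (subtopology (powertop_real UNIV) S) euclideanreal (\<lambda>f. f i)"
  by (rule continuous_map_from_subtopology[OF continuous_map_product_projection[OF UNIV_I]])

lemma cont_Pm: "continuous_map (subtopology (powertop_real UNIV) S) euclideanreal (\<lambda>f. Pm m t f i)"
proof (cases "i < 2*m")
  case True then show ?thesis unfolding Pm_def by (simp add: continuous_map_diff proj)
next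
  case False then show ?thesis unfolding Pm_def by simp
qed

lemma cont_Rm: "continuous_map (subtopology (powertop_real UNIV) S) euclideanreal (\<lambda>y. Rm y k)"
proof -
  have c: "continuous_map (subtopology (powertop_real UNIV) S) euclideanreal (\<lambda>y. max 0 (max (- y a) (- y b)))" for a b
    by (intro continuous_map_real_max continuous_map_minus continuous_map_canonical_const proj)
  consider "k mod 3 = 0" | "k mod 3 = 1" | "k mod 3 \<noteq> 0 \<and> k mod 3 \<noteq> 1" by blast
  then show ?thesis
  proof cases
    case 1 then show ?thesis unfolding Rm_def by (simp add: continuous_map_add c proj)
  next
    case 2 then show ?thesis unfolding Rm_def by (simp add: continuous_map_add c proj)
  next
    case 3 then show ?thesis unfolding Rm_def by (simp add: c)
  qed
qed

lemma cont_Qm: "continuous_map (subtopology (powertop_real UNIV) S) euclideanreal (\<lambda>y. Qm m t y e)"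
  by (cases "e \<in> t ` {..<3*m}") (simp_all add: Qm_def cont_Rm)

lemma homeo_SK: "subtopology (powertop_real UNIV) (SK m t) homeomorphic_space nsphere (2*m-1)"
proof -
  have ns: "nsphere (2*m-1) = subtopology (powertop_real UNIV) (SS m)"
    unfolding nsphere SS_def by simp
  have cF: "continuous_map (subtopology (powertop_real UNIV) (SK m t)) (subtopology (powertop_real UNIV) (SS m)) FF"
    unfolding continuous_map_in_subtopology continuous_map_componentwise_UNIV
  proof (intro conjI allI)
    fix i
    show "continuous_map (subtopology (powertop_real UNIV) (SK m t)) euclideanreal (\<lambda>x. FF x i)"
      unfolding FF_def Nm_def
      apply (intro continuous_map_real_divide cont_Pm continuous_map_sqrt continuous_map_sum continuous_map_real_pow finite_lessThan)
      using N_pos unfolding Nm_def by (metis IntD2 less_irrefl topspace_subtopology)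
  next
    show "FF \<in> topspace (subtopology (powertop_real UNIV) (SK m t)) \<rightarrow> SS m"
      using FF_in by auto
  qed
  have cG: "continuous_map (subtopology (powertop_real UNIV) (SS m)) (subtopology (powertop_real UNIV) (SK m t)) GG"
    unfolding continuous_map_in_subtopology continuous_map_componentwise_UNIV
  proof (intro conjI allI)
    fix e
    show "continuous_map (subtopology (powertop_real UNIV) (SS m)) euclideanreal (\<lambda>x. GG x e)"
      unfolding GG_def
      apply (intro continuous_map_real_divide cont_Qm continuous_map_sum finite_imageI finite_lessThan)
      using Q_sum_pos by (metis IntD2 less_irrefl topspace_subtopology)
  next
    show "GG \<in> topspace (subtopology (powertop_real UNIV) (SS m)) \<rightarrow> SK m t"
      using GG_in by auto
  qed
  have "homeomorphic_maps (subtopology (powertop_real UNIV) (SK m t)) (subtopology (powertop_real UNIV) (SS m)) FF GG"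
    unfolding homeomorphic_maps_def using cF cG GF FG by auto
  then show ?thesis unfolding ns homeomorphic_space_def by blast
qed

end

lemma realization_join:
  fixes V :: "'v set" and S :: "'v \<Rightarrow> 'e set"
  assumes finV: "finite V" and ne: "V \<noteq> {}" and c3: "\<forall>v\<in>V. card (S v) = 3"
    and disj: "\<forall>v\<in>V. \<forall>w\<in>V. v \<noteq> w \<longrightarrow> S v \<inter> S w = {}"
  shows "geom_realization (\<Union>(S ` V)) {F. F \<subseteq> \<Union>(S ` V) \<and> (\<forall>v\<in>V. \<not> S v \<subseteq> F)}
           homeomorphic_space nsphere (2 * card V - 1)"
proof -
  define m where "m = card V"
  have m1: "m \<ge> 1" using finV ne unfolding m_def by (simp add: Suc_leI card_gt_0_iff)
  obtain idx where idx: "bij_betw idx {0..<m} V" using ex_bij_betw_nat_finite[OF finV] unfolding m_def by blast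
  define g where "g v = (SOME h. bij_betw h {0..<3::nat} (S v))" for v
  have g: "bij_betw (g v) {0..<3} (S v)" if "v \<in> V" for v
  proof -
    have "finite (S v)" using c3 that by (metis card.infinite zero_neq_numeral)
    then have "\<exists>h. bij_betw h {0..<card (S v)} (S v)" by (rule ex_bij_betw_nat_finite)
    then have "\<exists>h. bij_betw h {0..<3::nat} (S v)" using c3 that by simp
    then show ?thesis unfolding g_def by (rule someI_ex)
  qed
  define t where "t k = g (idx (k div 3)) (k mod 3)" for k
  have idxV: "j < m \<Longrightarrow> idx j \<in> V" for j using idx by (auto simp: bij_betw_def)
  have tri: "S (idx j) = {t (3*j), t (3*j+1), t (3*j+2)}" if j: "j < m" for j
  proof -
    have "S (idx j) = g (idx j) ` {0..<3}" using g[OF idxV[OF j]] by (simp add: bij_betw_def)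
    also have "{0..<3::nat} = {0,1,2}" by auto
    also have "(3*j+1) div 3 = j" "(3*j+1) mod 3 = 1" "(3*j+2) div 3 = j" "(3*j+2) mod 3 = 2" by presburger+
    then have "g (idx j) ` {0,1,2} = {t (3*j), t (3*j+1), t (3*j+2)}" unfolding t_def by simp
    finally show ?thesis .
  qed
  have tk: "k < 3*m \<Longrightarrow> t k \<in> S (idx (k div 3))" for k
  proof -
    assume k: "k < 3*m"
    then have "idx (k div 3) \<in> V" using idxV by auto
    then show ?thesis unfolding t_def using g bij_betwE by fastforce
  qed
  have Veq: "V = idx ` {0..<m}" using idx by (simp add: bij_betw_def)
  have img: "t ` {..<3*m} = \<Union>(S ` V)"
  proof
    show "t ` {..<3*m} \<subseteq> \<Union>(S ` V)" using tk idxV by fastforce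
  next
    show "\<Union>(S ` V) \<subseteq> t ` {..<3*m}"
    proof
      fix e assume "e \<in> \<Union>(S ` V)"
      then obtain j where j: "j < m" and e: "e \<in> S (idx j)" unfolding Veq by auto
      then have "e = t (3*j) \<or> e = t (3*j+1) \<or> e = t (3*j+2)" using tri[OF j] by auto
      moreover have "3*j < 3*m" "3*j+1 < 3*m" "3*j+2 < 3*m" using j by auto
      ultimately show "e \<in> t ` {..<3*m}" by blast
    qed
  qed
  have inj: "inj_on t {..<3*m}"
  proof (rule inj_onI)
    fix k k' assume k: "k \<in> {..<3*m}" and k': "k' \<in> {..<3*m}" and eq: "t k = t k'"
    have d: "k div 3 < m" "k' div 3 < m" using k k' by auto
    have "t k \<in> S (idx (k div 3))" "t k' \<in> S (idx (k' div 3))" using tk k k' by auto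
    then have "idx (k div 3) = idx (k' div 3)"
      using disj idxV[OF d(1)] idxV[OF d(2)] eq by (metis disjoint_iff)
    then have dv: "k div 3 = k' div 3" using idx d unfolding bij_betw_def inj_on_def by auto
    then have "g (idx (k div 3)) (k mod 3) = g (idx (k div 3)) (k' mod 3)" using eq unfolding t_def by simp
    then have "k mod 3 = k' mod 3" using g[OF idxV[OF d(1)]] unfolding bij_betw_def inj_on_def by auto
    then show "k = k'" using dv by (metis div_mod_decomp)
  qed
  have seteq: "{f. (\<forall>v. 0 \<le> f v) \<and> (\<forall>v. v \<notin> \<Union>(S ` V) \<longrightarrow> f v = 0) \<and> sum f (\<Union>(S ` V)) = 1
        \<and> {v. f v \<noteq> 0} \<in> {F. F \<subseteq> \<Union>(S ` V) \<and> (\<forall>v\<in>V. \<not> S v \<subseteq> F)}} = SK m t"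
  proof -
    have "(\<forall>v\<in>V. \<not> S v \<subseteq> {v. f v \<noteq> 0}) \<longleftrightarrow>
          (\<forall>j<m. f (t (3*j)) = 0 \<or> f (t (3*j+1)) = 0 \<or> f (t (3*j+2)) = 0)" for f :: "'e \<Rightarrow> real"
    proof -
      have a: "(\<forall>v\<in>V. \<not> S v \<subseteq> X) \<longleftrightarrow> (\<forall>j<m. \<not> S (idx j) \<subseteq> X)" for X
        unfolding Veq by auto
      have b: "j < m \<Longrightarrow> (\<not> S (idx j) \<subseteq> {v. f v \<noteq> 0}) \<longleftrightarrow> (f (t (3*j)) = 0 \<or> f (t (3*j+1)) = 0 \<or> f (t (3*j+2)) = 0)" for j
        by (simp add: tri)
      show ?thesis unfolding a using b by blast
    qed
    then show ?thesis unfolding SK_def img[symmetric] by auto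
  qed
  show ?thesis
    unfolding geom_realization_def seteq m_def[symmetric] using homeo_SK[OF m1 inj] .
qed




lemma clawed_mem: "x \<in> clawed_edges V E \<longleftrightarrow> (\<exists>u e. x = {Orig u, Sub e} \<and> e \<in> E \<and> u \<in> e)
      \<or> (\<exists>v i. x = {Orig v, Leaf v i} \<and> v \<in> V \<and> i < 3 - vdeg E v)"
  unfolding clawed_edges_def by blast

lemma clawed_Sub: "x \<in> clawed_edges V E \<Longrightarrow> Sub e \<in> x \<Longrightarrow> e \<in> E \<and> (\<exists>u\<in>e. x = {Orig u, Sub e})"
  unfolding clawed_mem by auto

lemma clawed_Leaf: "x \<in> clawed_edges V E \<Longrightarrow> Leaf v i \<in> x \<Longrightarrow> x = {Orig v, Leaf v i}"
  unfolding clawed_mem by auto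

lemma clawed_Orig: "x \<in> clawed_edges V E \<Longrightarrow> Orig w \<in> x \<Longrightarrow>
   (\<exists>e. e \<in> E \<and> w \<in> e \<and> x = {Orig w, Sub e}) \<or> (\<exists>i. w \<in> V \<and> i < 3 - vdeg E w \<and> x = {Orig w, Leaf w i})"
  unfolding clawed_mem by auto


lemma clawed_join:
  fixes V :: "'a set" and E :: "'a set set"
  assumes finV: "finite V" and ne: "V \<noteq> {}" and EV: "\<forall>e\<in>E. card e = 2 \<and> e \<subseteq> V"
    and deg: "\<forall>v\<in>V. vdeg E v \<le> 3"
  shows "M2 (clawed_edges V E) homeomorphic_space nsphere (2 * card V - 1)"
proof -
  define CE where "CE = clawed_edges V E"
  define S where "S v = {x \<in> CE. Orig v \<in> x}" for v
  have "E \<subseteq> Pow V" using EV by auto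
  then have finE: "finite E" using finV by (simp add: finite_subset)
  have Sv: "S v = (\<lambda>e. {Orig v, Sub e}) ` {e\<in>E. v \<in> e} \<union> (\<lambda>i. {Orig v, Leaf v i}) ` {..<3 - vdeg E v}"
    if v: "v \<in> V" for v
  proof
    show "S v \<subseteq> (\<lambda>e. {Orig v, Sub e}) ` {e\<in>E. v \<in> e} \<union> (\<lambda>i. {Orig v, Leaf v i}) ` {..<3 - vdeg E v}"
    proof
      fix x assume "x \<in> S v"
      then have x: "x \<in> clawed_edges V E" "Orig v \<in> x" unfolding S_def CE_def by auto
      from clawed_Orig[OF x] show "x \<in> (\<lambda>e. {Orig v, Sub e}) ` {e\<in>E. v \<in> e} \<union> (\<lambda>i. {Orig v, Leaf v i}) ` {..<3 - vdeg E v}"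
        by blast
    qed
    show "(\<lambda>e. {Orig v, Sub e}) ` {e\<in>E. v \<in> e} \<union> (\<lambda>i. {Orig v, Leaf v i}) ` {..<3 - vdeg E v} \<subseteq> S v"
      unfolding S_def CE_def clawed_mem using v by blast
  qed
  have c3: "card (S v) = 3" if v: "v \<in> V" for v
  proof -
    have i1: "inj_on (\<lambda>e. {Orig v, Sub e}) {e\<in>E. v \<in> e}" by (auto simp: inj_on_def doubleton_eq_iff)
    have i2: "inj_on (\<lambda>i. {Orig v, Leaf v i}) {..<3 - vdeg E v}" by (auto simp: inj_on_def doubleton_eq_iff)
    have dj: "(\<lambda>e. {Orig v, Sub e}) ` {e\<in>E. v \<in> e} \<inter> (\<lambda>i. {Orig v, Leaf v i}) ` {..<3 - vdeg E v} = {}"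
      by (auto simp: doubleton_eq_iff)
    have "card (S v) = card {e\<in>E. v \<in> e} + (3 - vdeg E v)"
      unfolding Sv[OF v] using finE
      by (simp add: card_Un_disjoint[OF _ _ dj] card_image[OF i1] card_image[OF i2])
    then show ?thesis using deg v unfolding vdeg_def by auto
  qed
  have finS: "v \<in> V \<Longrightarrow> finite (S v)" for v using c3 by (metis card.infinite zero_neq_numeral)
  have OrigV: "x \<in> CE \<Longrightarrow> Orig w \<in> x \<Longrightarrow> w \<in> V" for x w
    unfolding CE_def using EV clawed_Orig[of x V E w] by blast
  have U: "\<Union>(S ` V) = CE"
  proof
    show "\<Union>(S ` V) \<subseteq> CE" unfolding S_def by auto
  next
    show "CE \<subseteq> \<Union>(S ` V)"
    proof
      fix x assume x: "x \<in> CE"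
      then obtain u where "Orig u \<in> x" unfolding CE_def clawed_mem by blast
      moreover then have "u \<in> V" using OrigV x by blast
      ultimately show "x \<in> \<Union>(S ` V)" using x unfolding S_def by blast
    qed
  qed
  have finCE: "finite CE" using U finV finS by (metis finite_UN)
  have disj: "\<forall>v\<in>V. \<forall>w\<in>V. v \<noteq> w \<longrightarrow> S v \<inter> S w = {}"
  proof (intro ballI impI)
    fix v w assume "v \<in> V" "w \<in> V" "v \<noteq> w"
    show "S v \<inter> S w = {}"
    proof (rule ccontr)
      assume "S v \<inter> S w \<noteq> {}"
      then obtain x where x: "x \<in> CE" "Orig v \<in> x" "Orig w \<in> x" unfolding S_def by blast
      from clawed_Orig[OF x(1)[unfolded CE_def] x(2)] show False using x(3) \<open>v \<noteq> w\<close> by auto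
    qed
  qed
  have TM: "two_matchings CE = {F. F \<subseteq> \<Union>(S ` V) \<and> (\<forall>v\<in>V. \<not> S v \<subseteq> F)}"
  proof (rule set_eqI, rule iffI)
    fix F assume F: "F \<in> two_matchings CE"
    then have FC: "F \<subseteq> CE" unfolding two_matchings_def by auto
    have "\<not> S v \<subseteq> F" if v: "v \<in> V" for v
    proof
      assume "S v \<subseteq> F"
      then have "S v \<subseteq> {e \<in> F. Orig v \<in> e}" unfolding S_def by auto
      moreover have "finite F" using FC finCE by (rule finite_subset)
      ultimately have "card (S v) \<le> card {e \<in> F. Orig v \<in> e}" by (simp add: card_mono)
      moreover have "card {e \<in> F. Orig v \<in> e} \<le> 2" using F unfolding two_matchings_def by blast
      ultimately show False using c3[OF v] by linarith
    qed
    then show "F \<in> {F. F \<subseteq> \<Union>(S ` V) \<and> (\<forall>v\<in>V. \<not> S v \<subseteq> F)}" using FC U by auto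
  next
    fix F assume F: "F \<in> {F. F \<subseteq> \<Union>(S ` V) \<and> (\<forall>v\<in>V. \<not> S v \<subseteq> F)}"
    then have FC: "F \<subseteq> CE" and nS: "\<forall>v\<in>V. \<not> S v \<subseteq> F" using U by auto
    have all: "card {e \<in> F. x \<in> e} \<le> 2" for x
    proof (cases x)
      case (Orig v)
      show ?thesis
      proof (cases "v \<in> V")
        case True
        have "{e \<in> F. x \<in> e} \<subset> S v" using FC nS True unfolding S_def Orig by auto
        then have "card {e \<in> F. x \<in> e} < card (S v)" using finS[OF True] by (rule psubset_card_mono[rotated])
        then show ?thesis using c3[OF True] by simp
      next
        case False
        then have "{e \<in> F. x \<in> e} = {}" using FC OrigV Orig by blast
        then show ?thesis by (metis card.empty le0)
      qed
    next
      case (Sub e)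
      show ?thesis
      proof (cases "e \<in> E")
        case True
        have "{e' \<in> F. x \<in> e'} \<subseteq> (\<lambda>u. {Orig u, Sub e}) ` e"
        proof
          fix e' assume "e' \<in> {e' \<in> F. x \<in> e'}"
          then have "e' \<in> CE" "Sub e \<in> e'" using FC Sub by auto
          then show "e' \<in> (\<lambda>u. {Orig u, Sub e}) ` e" using clawed_Sub unfolding CE_def by blast
        qed
        moreover have "finite e" using True EV by (metis card.infinite zero_neq_numeral)
        ultimately have "card {e' \<in> F. x \<in> e'} \<le> card ((\<lambda>u. {Orig u, Sub e}) ` e)" by (simp add: card_mono)
        also have "\<dots> \<le> card e" by (rule card_image_le) fact
        finally show ?thesis using True EV by simp
      next
        case False
        have "{e' \<in> F. x \<in> e'} = {}" using FC False clawed_Sub unfolding Sub CE_def by blast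
        then show ?thesis by (metis card.empty le0)
      qed
    next
      case (Leaf v i)
      have "{e' \<in> F. x \<in> e'} \<subseteq> {{Orig v, Leaf v i}}"
      proof
        fix e' assume "e' \<in> {e' \<in> F. x \<in> e'}"
        then have "e' \<in> clawed_edges V E" "Leaf v i \<in> e'" using FC Leaf unfolding CE_def by auto
        then show "e' \<in> {{Orig v, Leaf v i}}" using clawed_Leaf[of e' V E v i] by simp
      qed
      then have "card {e' \<in> F. x \<in> e'} \<le> card {{Orig v, Leaf v i}}" by (intro card_mono finite.insertI finite.emptyI)
      then show ?thesis by simp
    qed
    show "F \<in> two_matchings CE" unfolding two_matchings_def mem_Collect_eq using FC all by blast
  qed
  have eq: "M2 CE = geom_realization (\<Union>(S ` V)) {F. F \<subseteq> \<Union>(S ` V) \<and> (\<forall>v\<in>V. \<not> S v \<subseteq> F)}"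
    by (simp only: M2_def TM U)
  have c3': "\<forall>v\<in>V. card (S v) = 3" using c3 by blast
  have h: "geom_realization (\<Union>(S ` V)) {F. F \<subseteq> \<Union>(S ` V) \<and> (\<forall>v\<in>V. \<not> S v \<subseteq> F)}
           homeomorphic_space nsphere (2 * card V - 1)"
    by (rule realization_join[OF finV ne c3' disj])
  show ?thesis using h unfolding eq[symmetric] CE_def .
qed


lemma vdeg_le3:
  assumes "finite I" "card I \<le> 3" "{e \<in> E. v \<in> e} \<subseteq> h ` I"
  shows "vdeg E v \<le> 3"
proof -
  have "vdeg E v \<le> card (h ` I)" unfolding vdeg_def using assms by (simp add: card_mono)
  also have "\<dots> \<le> card I" using assms by (simp add: card_image_le)
  finally show ?thesis using assms by simp
qed

lemma CP_homeo:
  assumes "n \<ge> 3"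
  shows "M2 (CP (n - 1)) homeomorphic_space nsphere (2 * n - 1)"
proof -
  define k where "k = n - 1"
  have cardV: "card {0..k} = n" unfolding k_def using assms by simp
  have EV: "\<forall>e\<in>path_edges k. card e = 2 \<and> e \<subseteq> {0..k}"
    unfolding path_edges_def by auto
  have deg: "\<forall>v\<in>{0..k}. vdeg (path_edges k) v \<le> 3"
  proof
    fix v :: nat
    have "{e \<in> path_edges k. v \<in> e} \<subseteq> (\<lambda>i. {i, Suc i}) ` {v, v - 1}"
      unfolding path_edges_def by auto
    then show "vdeg (path_edges k) v \<le> 3"
      by (rule vdeg_le3[rotated 2]) (auto simp: card_insert_if)
  qed
  have "M2 (clawed_edges {0..k} (path_edges k)) homeomorphic_space nsphere (2 * card {0..k} - 1)"
    by (rule clawed_join) (use EV deg in auto)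
  then show ?thesis unfolding CP_def k_def[symmetric] cardV .
qed

lemma CC_homeo:
  assumes "n \<ge> 3"
  shows "M2 (CC n) homeomorphic_space nsphere (2 * n - 1)"
proof -
  have EV: "\<forall>e\<in>cycle_edges n. card e = 2 \<and> e \<subseteq> {0..<n}"
  proof
    fix e assume "e \<in> cycle_edges n"
    then obtain i where i: "i < n" "e = {i, Suc i mod n}" unfolding cycle_edges_def by auto
    have "i \<noteq> Suc i mod n"
    proof (cases "Suc i < n")
      case True then show ?thesis by simp
    next
      case False then have "Suc i = n" using i by simp
      then show ?thesis using assms by simp
    qed
    then show "card e = 2 \<and> e \<subseteq> {0..<n}" using i assms by auto
  qed
  have deg: "\<forall>v\<in>{0..<n}. vdeg (cycle_edges n) v \<le> 3"
  proof
    fix v :: nat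
    have "{e \<in> cycle_edges n. v \<in> e} \<subseteq> (\<lambda>i. {i, Suc i mod n}) ` {v, v - 1, n - 1}"
    proof
      fix e assume "e \<in> {e \<in> cycle_edges n. v \<in> e}"
      then obtain i where i: "i < n" "e = {i, Suc i mod n}" and v: "v = i \<or> v = Suc i mod n"
        unfolding cycle_edges_def by auto
      have "i \<in> {v, v - 1, n - 1}"
      proof (cases "Suc i < n")
        case True then show ?thesis using v by auto
      next
        case False then have "i = n - 1" using i by simp
        then show ?thesis by simp
      qed
      then show "e \<in> (\<lambda>i. {i, Suc i mod n}) ` {v, v - 1, n - 1}" using i by auto
    qed
    then show "vdeg (cycle_edges n) v \<le> 3"
      by (rule vdeg_le3[rotated 2]) (auto simp: card_insert_if)
  qed
  have "M2 (clawed_edges {0..<n} (cycle_edges n)) homeomorphic_space nsphere (2 * card {0..<n} - 1)"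
    by (rule clawed_join) (use EV deg assms in auto)
  then show ?thesis unfolding CC_def by simp
qed

theorem mainTheorem11:
  fixes n :: nat
  assumes "n \<ge> 3"
  shows "M2 (CP (n - 1)) homotopy_equivalent_space M2 (CC n)
       \<and> M2 (CC n) homotopy_equivalent_space nsphere (2 * n - 1)"
proof
  have a: "M2 (CP (n - 1)) homotopy_equivalent_space nsphere (2 * n - 1)"
    using CP_homeo[OF assms] by (rule homeomorphic_imp_homotopy_equivalent_space)
  have b: "M2 (CC n) homotopy_equivalent_space nsphere (2 * n - 1)"
    using CC_homeo[OF assms] by (rule homeomorphic_imp_homotopy_equivalent_space)
  show "M2 (CP (n - 1)) homotopy_equivalent_space M2 (CC n)"
    using a b homotopy_eqv_trans homotopy_equivalent_space_sym by blast
  show "M2 (CC n) homotopy_equivalent_space nsphere (2 * n - 1)" by (rule b)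
qed

end
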